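(* Let $X,X_1,X_2,\dots$ be random variables in a sub-linear expectation space $(\Omega,\mathscr H,\hat{\mathbb E})$ with $\{X_n\}$ independent, $X_n\overset d=X$ for all $n$, and $\hat{\mathbb E}[X]=\hat{\mathcal E}[X]=0$. Let $V_n^2=\sum_{i=1}^nX_i^2$, $l(x)=\hat{\mathbb E}[X^2\wedge x^2]$, and assume: (I) $\mathbb V(|X|\ge x)=o(x^{-2}l(x))$ as $x\to\infty$; (II) $\limsup_{x\to\infty}\hat{\mathbb E}[X^2\wedge x^2]/\hat{\mathcal E}[X^2\wedge x^2]<r^2$ for some $0<r<\infty$; (III) $\hat{\mathbb E}[(|X|-c)^+]\to0$ as $c\to\infty$; (IV) $x_n\to\infty$ and $x_n=o(\sqrt n)$. Let $b_0=\inf\{x\ge0:l(x)>0\}$ and $z_n=\inf\{s\ge b_0+1: l(s)/s^2\le x_n^2/n\}$. Then for every $0<\delta<r^{-2}$ and all sufficiently large $n$, $$\mathbb V\big(V_n^2\le\delta nl(z_n)\big)\le\exp\{-2x_n^2\}.$$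
   Context: Sub-linear expectation space: $\mathscr H$ is a linear space of real functions on a measurable space $(\Omega,\mathcal F)$, closed under $\varphi(X_1,\dots,X_n)$ for $\varphi$ bounded continuous or locally Lipschitz with polynomial growth; $\hat{\mathbb E}:\mathscr H\to[-\infty,\infty]$ is monotone, constant preserving, sub-additive and positively homogeneous. $\hat{\mathcal E}[X]=-\hat{\mathbb E}[-X]$; $\mathbb V(A)=\inf\{\hat{\mathbb E}[\xi]:I_A\le\xi,\xi\in\mathscr H\}$. Independence: $\mathbf Y$ is independent of $\mathbf X$ if $\hat{\mathbb E}[\varphi(\mathbf X,\mathbf Y)]=\hat{\mathbb E}[\hat{\mathbb E}[\varphi(\mathbf x,\mathbf Y)]|_{\mathbf x=\mathbf X}]$ for all locally Lipschitz $\varphi$ of polynomial growth (whenever the relevant expectations are finite); $\{X_n\}$ is independent if $X_{i+1}$ is independent of $(X_1,\dots,X_i)$ for each $i$. $X_n\overset d=X$ means $\hat{\mathbb E}[\varphi(X_n)]=\hat{\mathbb E}[\varphi(X)]$ for all such $\varphi$. $a\wedge b=\min(a,b)$. *)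

theory Defs
  imports "HOL-Analysis.Analysis" "HOL-Library.Landau_Symbols"
begin

text \<open>Points of R^n are represented by real lists of length n.\<close>

definition lnorm :: "real list \<Rightarrow> real" where
  "lnorm xs = sqrt (\<Sum>t\<leftarrow>xs. t^2)"

definition ldist :: "real list \<Rightarrow> real list \<Rightarrow> real" where
  "ldist xs ys = lnorm (map (\<lambda>(a,b). a - b) (zip xs ys))"

definition bdd_cont_fun :: "nat \<Rightarrow> (real list \<Rightarrow> real) \<Rightarrow> bool" where
  "bdd_cont_fun n \<phi> \<longleftrightarrow>
     (\<exists>B. \<forall>x. length x = n \<longrightarrow> \<bar>\<phi> x\<bar> \<le> B) \<and>
     (\<forall>x. length x = n \<longrightarrow> (\<forall>\<epsilon>>0. \<exists>\<delta>>0. \<forall>y. length y = n \<and> ldist x y < \<delta>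
          \<longrightarrow> \<bar>\<phi> x - \<phi> y\<bar> < \<epsilon>))"

definition lip_poly_fun :: "nat \<Rightarrow> (real list \<Rightarrow> real) \<Rightarrow> bool" where
  "lip_poly_fun n \<phi> \<longleftrightarrow>
     (\<exists>C (m::nat). \<forall>x y. length x = n \<and> length y = n \<longrightarrow>
        \<bar>\<phi> x - \<phi> y\<bar> \<le> C * (1 + lnorm x ^ m + lnorm y ^ m) * ldist x y)"

definition sublinear_expectation_space ::
  "('a \<Rightarrow> real) set \<Rightarrow> (('a \<Rightarrow> real) \<Rightarrow> ereal) \<Rightarrow> bool" where
  "sublinear_expectation_space H E \<longleftrightarrow>
     (\<forall>c. (\<lambda>_. c) \<in> H) \<and>
     (\<forall>X\<in>H. \<forall>Y\<in>H. (\<lambda>\<omega>. X \<omega> + Y \<omega>) \<in> H) \<and>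
     (\<forall>X\<in>H. \<forall>c. (\<lambda>\<omega>. c * X \<omega>) \<in> H) \<and>
     (\<forall>n \<phi> Xs. length Xs = n \<and> set Xs \<subseteq> H \<and> (bdd_cont_fun n \<phi> \<or> lip_poly_fun n \<phi>)
        \<longrightarrow> (\<lambda>\<omega>. \<phi> (map (\<lambda>X. X \<omega>) Xs)) \<in> H) \<and>
     (\<forall>X\<in>H. \<forall>Y\<in>H. (\<forall>\<omega>. X \<omega> \<le> Y \<omega>) \<longrightarrow> E X \<le> E Y) \<and>
     (\<forall>c. E (\<lambda>_. c) = ereal c) \<and>
     (\<forall>X\<in>H. \<forall>Y\<in>H. E (\<lambda>\<omega>. X \<omega> + Y \<omega>) \<le> E X + E Y) \<and>
     (\<forall>X\<in>H. \<forall>c>0. E (\<lambda>\<omega>. c * X \<omega>) = ereal c * E X)"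

definition lower_exp :: "(('a \<Rightarrow> real) \<Rightarrow> ereal) \<Rightarrow> ('a \<Rightarrow> real) \<Rightarrow> ereal" where
  "lower_exp E X = - E (\<lambda>\<omega>. - X \<omega>)"

definition capacity :: "('a \<Rightarrow> real) set \<Rightarrow> (('a \<Rightarrow> real) \<Rightarrow> ereal) \<Rightarrow> 'a set \<Rightarrow> ereal" where
  "capacity H E A = Inf {E \<xi> | \<xi>. \<xi> \<in> H \<and> (\<forall>\<omega>. indicator A \<omega> \<le> \<xi> \<omega>)}"

definition indep_of ::
  "('a \<Rightarrow> real) set \<Rightarrow> (('a \<Rightarrow> real) \<Rightarrow> ereal) \<Rightarrow> ('a \<Rightarrow> real) list \<Rightarrow> ('a \<Rightarrow> real) \<Rightarrow> bool" where
  "indep_of H E Xs Y \<longleftrightarrow>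
     (\<forall>\<phi>. lip_poly_fun (Suc (length Xs)) \<phi> \<longrightarrow>
        (\<forall>x. length x = length Xs \<longrightarrow> \<bar>E (\<lambda>\<omega>. \<phi> (x @ [Y \<omega>]))\<bar> \<noteq> \<infinity>) \<longrightarrow>
        E (\<lambda>\<omega>. \<phi> (map (\<lambda>X. X \<omega>) Xs @ [Y \<omega>])) =
        E (\<lambda>\<omega>. real_of_ereal (E (\<lambda>\<omega>'. \<phi> (map (\<lambda>X. X \<omega>) Xs @ [Y \<omega>'])))))"

text \<open>independent sequence (0-based: Xs 0, Xs 1, ... stand for X_1, X_2, ...)\<close>
definition indep_seq ::
  "('a \<Rightarrow> real) set \<Rightarrow> (('a \<Rightarrow> real) \<Rightarrow> ereal) \<Rightarrow> (nat \<Rightarrow> 'a \<Rightarrow> real) \<Rightarrow> bool" where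
  "indep_seq H E Xs \<longleftrightarrow> (\<forall>i. indep_of H E (map Xs [0..<i]) (Xs i))"

definition ident_distr ::
  "(('a \<Rightarrow> real) \<Rightarrow> ereal) \<Rightarrow> ('a \<Rightarrow> real) \<Rightarrow> ('a \<Rightarrow> real) \<Rightarrow> bool" where
  "ident_distr E X Y \<longleftrightarrow>
     (\<forall>\<phi>. lip_poly_fun 1 \<phi> \<longrightarrow> E (\<lambda>\<omega>. \<phi> [X \<omega>]) = E (\<lambda>\<omega>. \<phi> [Y \<omega>]))"

definition ratio_inf :: "ereal \<Rightarrow> ereal \<Rightarrow> ereal" where
  "ratio_inf a b = (if b > 0 then a / b else \<infinity>)"

end

theory Submission
  imports Defs
begin


lemma exp_quad: fixes u :: real assumes "0 \<le> u" shows "exp (-u) \<le> 1 - u + u^2/2"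
proof -
  let ?h = "\<lambda>u::real. 1 - u + u^2/2 - exp (-u)"
  have "?h 0 \<le> ?h u"
  proof (rule DERIV_nonneg_imp_nondecreasing[OF assms])
    fix x :: real assume "0 \<le> x" "x \<le> u"
    have d: "DERIV ?h x :> (-1 + x + exp (-x))"
      by (auto intro!: derivative_eq_intros simp: power2_eq_square)
    have "1 + (-x) \<le> exp (-x)" by (rule exp_ge_add_one_self)
    then show "\<exists>y. DERIV ?h x :> y \<and> y \<ge> 0" using d by (intro exI[of _ "-1 + x + exp (-x)"]) auto
  qed
  then show ?thesis by simp
qed

lemma exp_lip: fixes u v :: real assumes "u \<le> 0" "v \<le> 0" shows "\<bar>exp u - exp v\<bar> \<le> \<bar>u - v\<bar>"
proof -
  have k: "exp q - exp p \<le> q - p" if "p \<le> q" "q \<le> 0" for p q :: real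
  proof -
    have "1 + (p - q) \<le> exp (p - q)" by (rule exp_ge_add_one_self)
    then have "1 - exp (p - q) \<le> q - p" by linarith
    moreover have "exp q \<le> 1" using that by simp
    moreover have "0 \<le> 1 - exp (p - q)" using that by simp
    ultimately have "exp q * (1 - exp (p - q)) \<le> 1 * (q - p)"
      by (intro mult_mono) auto
    moreover have "exp q * (1 - exp (p - q)) = exp q - exp p"
      by (simp add: algebra_simps exp_diff)
    ultimately show ?thesis by simp
  qed
  show ?thesis
  proof (cases "u \<le> v")
    case True then show ?thesis using k[of u v] assms by auto
  next
    case False then show ?thesis using k[of v u] assms by auto
  qed
qed

lemma min_sq_lip: fixes a b t :: real
  shows "\<bar>min (a^2) (t^2) - min (b^2) (t^2)\<bar> \<le> 2 * \<bar>t\<bar> * \<bar>a - b\<bar>"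
proof -
  define p where "p = min \<bar>a\<bar> \<bar>t\<bar>"
  define q where "q = min \<bar>b\<bar> \<bar>t\<bar>"
  have pa: "min (a^2) (t^2) = p^2" unfolding p_def
    by (metis abs_ge_zero min_def power2_abs power_mono power2_le_imp_le)
  have qb: "min (b^2) (t^2) = q^2" unfolding q_def
    by (metis abs_ge_zero min_def power2_abs power_mono power2_le_imp_le)
  have "\<bar>p - q\<bar> \<le> \<bar>a - b\<bar>" unfolding p_def q_def by (auto simp: min_def abs_if split: if_splits)
  moreover have "0 \<le> p + q" "p + q \<le> 2 * \<bar>t\<bar>" unfolding p_def q_def by auto
  ultimately have "\<bar>p - q\<bar> * (p + q) \<le> \<bar>a - b\<bar> * (2 * \<bar>t\<bar>)"
    by (intro mult_mono) auto
  moreover have "\<bar>p^2 - q^2\<bar> = \<bar>p - q\<bar> * (p + q)"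
  proof -
    have "p^2 - q^2 = (p - q) * (p + q)" by (simp add: power2_eq_square algebra_simps)
    then show ?thesis using \<open>0 \<le> p + q\<close> by (simp add: abs_mult)
  qed
  ultimately show ?thesis using pa qb by (simp add: mult_ac)
qed

lemma ldist_nonneg: "0 \<le> ldist x y"
  unfolding ldist_def lnorm_def by (rule real_sqrt_ge_zero) (auto intro!: sum_list_nonneg)

lemma lnorm_Cons: "lnorm (a # x) = sqrt (a^2 + (lnorm x)^2)"
proof -
  have "0 \<le> sum_list (map power2 x)" by (auto intro!: sum_list_nonneg)
  then show ?thesis unfolding lnorm_def by simp
qed

lemma ldist_Cons: "ldist (a # x) (b # y) = sqrt ((a - b)^2 + (ldist x y)^2)"
  unfolding ldist_def by (simp add: lnorm_Cons)

lemma ldist_single: "ldist [a] [b] = \<bar>a - b\<bar>"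
  unfolding ldist_def lnorm_def by simp

lemma lip_to_lpf:
  assumes "0 \<le> C" "\<And>x y. length x = n \<Longrightarrow> length y = n \<Longrightarrow> \<bar>\<phi> x - \<phi> y\<bar> \<le> C * ldist x y"
  shows "lip_poly_fun n \<phi>"
  unfolding lip_poly_fun_def
proof (intro exI[of _ C] exI[of _ "0::nat"] allI impI)
  fix x y :: "real list" assume "length x = n \<and> length y = n"
  then have "\<bar>\<phi> x - \<phi> y\<bar> \<le> C * ldist x y" using assms(2) by auto
  also have "\<dots> \<le> C * (1 + lnorm x ^ 0 + lnorm y ^ 0) * ldist x y"
    using assms(1) ldist_nonneg[of x y] by (simp add: mult_right_mono)
  finally show "\<bar>\<phi> x - \<phi> y\<bar> \<le> C * (1 + lnorm x ^ 0 + lnorm y ^ 0) * ldist x y" .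
qed

lemma prod_list_01: assumes "\<And>a. 0 \<le> g a \<and> g a \<le> (1::real)"
  shows "0 \<le> prod_list (map g x) \<and> prod_list (map g x) \<le> 1"
proof (induction x)
  case (Cons a x) then show ?case using assms[of a] by (auto intro: mult_le_one)
qed simp

lemma prod_lip:
  fixes g :: "real \<Rightarrow> real"
  assumes g01: "\<And>a. 0 \<le> g a \<and> g a \<le> 1" and gl: "\<And>a b. \<bar>g a - g b\<bar> \<le> K * \<bar>a - b\<bar>" and K: "0 \<le> K"
  shows "length x = length y \<Longrightarrow> \<bar>prod_list (map g x) - prod_list (map g y)\<bar> \<le> K * length x * ldist x y"
proof (induction x arbitrary: y)
  case Nil then show ?case by simp
next
  case (Cons a x)
  then obtain b y' where y: "y = b # y'" and len: "length x = length y'" by (cases y) auto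
  let ?P = "prod_list (map g x)" and ?Q = "prod_list (map g y')"
  have P01: "0 \<le> ?P" "?P \<le> 1" using prod_list_01[of g x] g01 by auto
  have Q01: "0 \<le> ?Q" using prod_list_01[of g y'] g01 by auto
  have IH: "\<bar>?P - ?Q\<bar> \<le> K * length x * ldist x y'" using Cons.IH len by blast
  have d1: "\<bar>a - b\<bar> \<le> ldist (a # x) (b # y')"
  proof -
    have "sqrt ((a - b)^2) \<le> sqrt ((a - b)^2 + (ldist x y')^2)" by (rule real_sqrt_le_mono) simp
    then show ?thesis by (simp add: ldist_Cons)
  qed
  have d2: "ldist x y' \<le> ldist (a # x) (b # y')"
  proof -
    have "sqrt ((ldist x y')^2) \<le> sqrt ((a - b)^2 + (ldist x y')^2)" by (rule real_sqrt_le_mono) simp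
    then show ?thesis using ldist_nonneg[of x y'] by (simp add: ldist_Cons)
  qed
  have "g a * ?P - g b * ?Q = (g a - g b) * ?P + g b * (?P - ?Q)" by (simp add: algebra_simps)
  moreover have "\<bar>(g a - g b) * ?P + g b * (?P - ?Q)\<bar> \<le> \<bar>(g a - g b) * ?P\<bar> + \<bar>g b * (?P - ?Q)\<bar>"
    by (rule abs_triangle_ineq)
  moreover have "\<bar>(g a - g b) * ?P\<bar> = \<bar>g a - g b\<bar> * ?P" using P01 by (simp add: abs_mult)
  moreover have "\<bar>g b * (?P - ?Q)\<bar> = g b * \<bar>?P - ?Q\<bar>" using g01[of b] by (simp add: abs_mult)
  moreover have h1: "\<bar>g a - g b\<bar> * ?P \<le> (K * \<bar>a - b\<bar>) * 1"
    by (rule mult_mono) (use gl[of a b] P01 K in auto)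
  moreover have h2: "g b * \<bar>?P - ?Q\<bar> \<le> 1 * (K * length x * ldist x y')"
    by (rule mult_mono) (use g01[of b] IH in auto)
  moreover have h3: "K * \<bar>a - b\<bar> \<le> K * ldist (a # x) (b # y')"
    by (rule mult_left_mono) (use d1 K in auto)
  moreover have h4: "(K * length x) * ldist x y' \<le> (K * length x) * ldist (a # x) (b # y')"
    by (rule mult_left_mono) (use d2 K in auto)
  ultimately have "\<bar>g a * ?P - g b * ?Q\<bar> \<le> K * ldist (a # x) (b # y') + K * length x * ldist (a # x) (b # y')"
    by linarith
  then show ?case using y by (simp add: algebra_simps)
qed



lemma ssp_H_const: "sublinear_expectation_space H E \<Longrightarrow> (\<lambda>_. c) \<in> H"
  unfolding sublinear_expectation_space_def by blast
lemma ssp_H_add: "sublinear_expectation_space H E \<Longrightarrow> X \<in> H \<Longrightarrow> Y \<in> H \<Longrightarrow> (\<lambda>\<omega>. X \<omega> + Y \<omega>) \<in> H"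
  unfolding sublinear_expectation_space_def by blast
lemma ssp_H_smul: "sublinear_expectation_space H E \<Longrightarrow> X \<in> H \<Longrightarrow> (\<lambda>\<omega>. c * X \<omega>) \<in> H"
  unfolding sublinear_expectation_space_def by blast
lemma ssp_H_lip: "sublinear_expectation_space H E \<Longrightarrow> set Ys \<subseteq> H \<Longrightarrow> lip_poly_fun (length Ys) \<phi>
   \<Longrightarrow> (\<lambda>\<omega>. \<phi> (map (\<lambda>X. X \<omega>) Ys)) \<in> H"
  unfolding sublinear_expectation_space_def by blast
lemma ssp_mono: "sublinear_expectation_space H E \<Longrightarrow> X \<in> H \<Longrightarrow> Y \<in> H \<Longrightarrow> (\<And>\<omega>. X \<omega> \<le> Y \<omega>) \<Longrightarrow> E X \<le> E Y"
  unfolding sublinear_expectation_space_def by blast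
lemma ssp_const: "sublinear_expectation_space H E \<Longrightarrow> E (\<lambda>_. c) = ereal c"
  unfolding sublinear_expectation_space_def by blast
lemma ssp_add: "sublinear_expectation_space H E \<Longrightarrow> X \<in> H \<Longrightarrow> Y \<in> H \<Longrightarrow> E (\<lambda>\<omega>. X \<omega> + Y \<omega>) \<le> E X + E Y"
  unfolding sublinear_expectation_space_def by blast
lemma ssp_hom: "sublinear_expectation_space H E \<Longrightarrow> X \<in> H \<Longrightarrow> c > 0 \<Longrightarrow> E (\<lambda>\<omega>. c * X \<omega>) = ereal c * E X"
  unfolding sublinear_expectation_space_def by blast

lemma lpf1:
  assumes "0 \<le> C" "\<And>a b. \<bar>f a - f b\<bar> \<le> C * \<bar>a - b\<bar>"
  shows "lip_poly_fun 1 (\<lambda>ys. f (hd ys))"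
proof (rule lip_to_lpf[OF assms(1)])
  fix x y :: "real list" assume "length x = 1" "length y = 1"
  then obtain a b where "x = [a]" "y = [b]" by (auto simp: length_Suc_conv)
  then show "\<bar>f (hd x) - f (hd y)\<bar> \<le> C * ldist x y" using assms(2)[of a b] by (simp add: ldist_single)
qed

lemma ssp_H_comp1:
  assumes S: "sublinear_expectation_space H E" and Y: "Y \<in> H"
    and "0 \<le> C" "\<And>a b. \<bar>f a - f b\<bar> \<le> C * \<bar>a - b\<bar>"
  shows "(\<lambda>\<omega>. f (Y \<omega>)) \<in> H"
  using ssp_H_lip[OF S, of "[Y]" "\<lambda>ys. f (hd ys)"] lpf1[OF assms(3,4)] Y by simp

lemma ident_comp:
  assumes "ident_distr E Y Z" "0 \<le> C" "\<And>a b. \<bar>f a - f b\<bar> \<le> C * \<bar>a - b\<bar>"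
  shows "E (\<lambda>\<omega>. f (Y \<omega>)) = E (\<lambda>\<omega>. f (Z \<omega>))"
proof -
  have "E (\<lambda>\<omega>. (\<lambda>ys. f (hd ys)) [Y \<omega>]) = E (\<lambda>\<omega>. (\<lambda>ys. f (hd ys)) [Z \<omega>])"
    using assms(1) lpf1[OF assms(2,3)] unfolding ident_distr_def by blast
  then show ?thesis by simp
qed

lemma ssp_fin:
  assumes S: "sublinear_expectation_space H E" and Y: "Y \<in> H"
    and "\<And>\<omega>. a \<le> Y \<omega>" "\<And>\<omega>. Y \<omega> \<le> b"
  shows "E Y = ereal (real_of_ereal (E Y))" "a \<le> real_of_ereal (E Y)" "real_of_ereal (E Y) \<le> b"
proof -
  have "E (\<lambda>_. a) \<le> E Y" by (rule ssp_mono[OF S ssp_H_const[OF S] Y]) (use assms in auto)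
  moreover have "E Y \<le> E (\<lambda>_. b)" by (rule ssp_mono[OF S Y ssp_H_const[OF S]]) (use assms in auto)
  ultimately have "ereal a \<le> E Y" "E Y \<le> ereal b" using ssp_const[OF S] by auto
  then show "E Y = ereal (real_of_ereal (E Y))" "a \<le> real_of_ereal (E Y)" "real_of_ereal (E Y) \<le> b"
    by (cases "E Y"; auto)+
qed

lemma prod_list_pos: fixes g :: "'b \<Rightarrow> real" and x :: "'b list"
  shows "(\<And>a. 0 < g a) \<Longrightarrow> 0 < prod_list (map g x)"
  by (induction x) auto

lemma prod_E:
  assumes S: "sublinear_expectation_space H E" and XsH: "\<And>n. Xs n \<in> H" and XH: "X \<in> H"
    and indep: "indep_seq H E Xs" and distr: "\<And>n. ident_distr E (Xs n) X"
    and K: "0 \<le> K" and gl: "\<And>a b. \<bar>g a - g b\<bar> \<le> K * \<bar>a - b\<bar>"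
    and c0: "0 < c0" and gb: "\<And>a. c0 \<le> g a \<and> g a \<le> (1::real)"
    and G: "G = real_of_ereal (E (\<lambda>\<omega>. g (X \<omega>)))"
  shows "(\<lambda>\<omega>. prod_list (map (\<lambda>i. g (Xs i \<omega>)) [0..<k])) \<in> H \<and>
         E (\<lambda>\<omega>. prod_list (map (\<lambda>i. g (Xs i \<omega>)) [0..<k])) = ereal (G ^ k)"
proof -
  have g01: "\<And>a. 0 \<le> g a \<and> g a \<le> 1" using gb c0 by (meson less_le_trans less_imp_le)
  have gpos: "\<And>a. 0 < g a" using gb c0 by (meson less_le_trans)
  have gXH: "(\<lambda>\<omega>. g (X \<omega>)) \<in> H" by (rule ssp_H_comp1[OF S XH K gl])
  have EgX: "E (\<lambda>\<omega>. g (X \<omega>)) = ereal G" and Gge: "c0 \<le> G"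
    using ssp_fin[OF S gXH, of c0 1] gb G by auto
  have Gpos: "0 < G" using Gge c0 by linarith
  define \<phi> where "\<phi> = (\<lambda>ys. prod_list (map g ys))"
  have lpf: "lip_poly_fun n \<phi>" for n
    unfolding \<phi>_def
  proof (rule lip_to_lpf[of "K * n"])
    show "0 \<le> K * real n" using K by simp
    fix x y :: "real list" assume "length x = n" "length y = n"
    then show "\<bar>prod_list (map g x) - prod_list (map g y)\<bar> \<le> K * real n * ldist x y"
      using prod_lip[OF g01 gl K, of x y] by simp
  qed
  show ?thesis
  proof (induction k)
    case 0
    show ?case using ssp_H_const[OF S, of 1] ssp_const[OF S, of 1] by (simp add: one_ereal_def)
  next
    case (Suc k)
    let ?P = "\<lambda>k \<omega>. prod_list (map (\<lambda>i. g (Xs i \<omega>)) [0..<k])"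
    have mem: "?P (Suc k) \<in> H"
      using ssp_H_lip[OF S, of "map Xs [0..<Suc k]" \<phi>] lpf[of "Suc k"] XsH
      by (auto simp: \<phi>_def o_def)
    have gkH: "(\<lambda>\<omega>. g (Xs k \<omega>)) \<in> H" by (rule ssp_H_comp1[OF S XsH K gl])
    have Egk: "E (\<lambda>\<omega>. g (Xs k \<omega>)) = ereal G" using ident_comp[OF distr K gl] EgX by simp
    have inner: "E (\<lambda>\<omega>'. \<phi> (xl @ [Xs k \<omega>'])) = ereal (\<phi> xl * G)" for xl
    proof -
      have "(\<lambda>\<omega>'. \<phi> (xl @ [Xs k \<omega>'])) = (\<lambda>\<omega>'. \<phi> xl * g (Xs k \<omega>'))" by (simp add: \<phi>_def)
      moreover have "0 < \<phi> xl" unfolding \<phi>_def by (rule prod_list_pos[OF gpos])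
      ultimately show ?thesis using ssp_hom[OF S gkH, of "\<phi> xl"] Egk by simp
    qed
    have ind: "indep_of H E (map Xs [0..<k]) (Xs k)" using indep unfolding indep_seq_def by blast
    have eq: "E (\<lambda>\<omega>. \<phi> (map (\<lambda>X. X \<omega>) (map Xs [0..<k]) @ [Xs k \<omega>])) =
        E (\<lambda>\<omega>. real_of_ereal (E (\<lambda>\<omega>'. \<phi> (map (\<lambda>X. X \<omega>) (map Xs [0..<k]) @ [Xs k \<omega>']))))"
      using ind lpf[of "Suc k"] inner unfolding indep_of_def by simp
    have l: "(\<lambda>\<omega>. \<phi> (map (\<lambda>X. X \<omega>) (map Xs [0..<k]) @ [Xs k \<omega>])) = ?P (Suc k)"
      by (simp add: \<phi>_def o_def)
    have r: "(\<lambda>\<omega>. real_of_ereal (E (\<lambda>\<omega>'. \<phi> (map (\<lambda>X. X \<omega>) (map Xs [0..<k]) @ [Xs k \<omega>'])))) =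
             (\<lambda>\<omega>. G * ?P k \<omega>)"
      unfolding inner by (simp add: \<phi>_def o_def mult.commute)
    have "E (?P (Suc k)) = E (\<lambda>\<omega>. G * ?P k \<omega>)" using eq l r by simp
    also have "\<dots> = ereal G * ereal (G ^ k)" using ssp_hom[OF S _ Gpos, of "?P k"] Suc by simp
    finally show ?case using mem by simp
  qed
qed



lemma msq_lip: fixes al be t :: real
  shows "\<bar>(al + be * min (a^2) (t^2)) - (al + be * min (b^2) (t^2))\<bar> \<le> (\<bar>be\<bar> * (2 * \<bar>t\<bar>)) * \<bar>a - b\<bar>"
proof -
  have "\<bar>(al + be * min (a^2) (t^2)) - (al + be * min (b^2) (t^2))\<bar> = \<bar>be\<bar> * \<bar>min (a^2) (t^2) - min (b^2) (t^2)\<bar>"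
    by (simp add: abs_mult flip: right_diff_distrib)
  also have "\<dots> \<le> \<bar>be\<bar> * (2 * \<bar>t\<bar> * \<bar>a - b\<bar>)" by (rule mult_left_mono[OF min_sq_lip]) simp
  finally show ?thesis by (simp add: mult_ac)
qed

lemma msq_H:
  assumes S: "sublinear_expectation_space H E" and XH: "X \<in> H"
  shows "(\<lambda>\<omega>. al + be * min ((X \<omega>)^2) (t^2)) \<in> H"
  by (rule ssp_H_comp1[OF S XH _ msq_lip]) simp

lemma msq_H': 
  assumes S: "sublinear_expectation_space H E" and XH: "X \<in> H"
  shows "(\<lambda>\<omega>. min ((X \<omega>)^2) (t^2)) \<in> H" "(\<lambda>\<omega>. - min ((X \<omega>)^2) (t^2)) \<in> H"
  using msq_H[OF S XH, of 0 1 t] msq_H[OF S XH, of 0 "-1" t] by simp_all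

lemma prod_list_upt: "prod_list (map f [0..<n]) = (\<Prod>i<n. f i :: real)"
  by (induction n) (auto simp: lessThan_Suc mult.commute)

lemma g_lip: fixes lam t :: real assumes "0 \<le> lam"
  shows "\<bar>exp (- (lam * min (a^2) (t^2))) - exp (- (lam * min (b^2) (t^2)))\<bar> \<le> (lam * (2 * \<bar>t\<bar>)) * \<bar>a - b\<bar>"
proof -
  have "\<bar>exp (- (lam * min (a^2) (t^2))) - exp (- (lam * min (b^2) (t^2)))\<bar>
      \<le> \<bar>(- (lam * min (a^2) (t^2))) - (- (lam * min (b^2) (t^2)))\<bar>"
    by (rule exp_lip) (use assms in auto)
  also have "\<dots> = \<bar>(0 + (-lam) * min (a^2) (t^2)) - (0 + (-lam) * min (b^2) (t^2))\<bar>" by simp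
  also have "\<dots> \<le> (\<bar>-lam\<bar> * (2 * \<bar>t\<bar>)) * \<bar>a - b\<bar>" by (rule msq_lip)
  finally show ?thesis using assms by simp
qed

lemma cap_bound:
  assumes S: "sublinear_expectation_space H E" and XsH: "\<And>n. Xs n \<in> H" and XH: "X \<in> H"
    and indep: "indep_seq H E Xs" and distr: "\<And>n. ident_distr E (Xs n) X"
    and lam: "0 < lam"
    and G: "G = real_of_ereal (E (\<lambda>\<omega>. exp (- (lam * min ((X \<omega>)^2) (t^2)))))"
  shows "capacity H E {\<omega>. (\<Sum>i<n. (Xs i \<omega>)\<^sup>2) \<le> B} \<le> ereal (exp (lam * B) * G ^ n)" "0 < G"
proof -
  define g where "g = (\<lambda>a::real. exp (- (lam * min (a^2) (t^2))))"
  have gl: "\<And>a b. \<bar>g a - g b\<bar> \<le> (lam * (2 * \<bar>t\<bar>)) * \<bar>a - b\<bar>" unfolding g_def using g_lip lam by simp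
  have K: "0 \<le> lam * (2 * \<bar>t\<bar>)" using lam by simp
  have gb: "exp (- (lam * t^2)) \<le> g a \<and> g a \<le> 1" for a
    unfolding g_def using lam by (auto simp: mult_left_mono)
  have G': "G = real_of_ereal (E (\<lambda>\<omega>. g (X \<omega>)))" using G by (simp add: g_def)
  note PE = prod_E[OF S XsH XH indep distr K gl _ gb G', of n, simplified]
  have gXH: "(\<lambda>\<omega>. g (X \<omega>)) \<in> H" by (rule ssp_H_comp1[OF S XH K gl])
  show "0 < G" using ssp_fin[OF S gXH, of "exp (- (lam * t^2))" 1] gb G' by (meson less_le_trans exp_gt_zero)
  define P where "P = (\<lambda>\<omega>. prod_list (map (\<lambda>i. g (Xs i \<omega>)) [0..<n]))"
  have PH: "P \<in> H" and EP: "E P = ereal (G ^ n)" using PE unfolding P_def by auto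
  define \<xi> where "\<xi> = (\<lambda>\<omega>. exp (lam * B) * P \<omega>)"
  have \<xi>H: "\<xi> \<in> H" unfolding \<xi>_def by (rule ssp_H_smul[OF S PH])
  have E\<xi>: "E \<xi> = ereal (exp (lam * B) * G ^ n)" unfolding \<xi>_def using ssp_hom[OF S PH, of "exp (lam * B)"] EP by simp
  have ind: "indicator {\<omega>. (\<Sum>i<n. (Xs i \<omega>)\<^sup>2) \<le> B} \<omega> \<le> \<xi> \<omega>" for \<omega>
  proof -
    have P_eq: "P \<omega> = (\<Prod>i<n. g (Xs i \<omega>))" unfolding P_def by (rule prod_list_upt)
    have Pnn: "0 \<le> P \<omega>" unfolding P_eq using gb by (meson exp_ge_zero order_trans prod_nonneg)
    have Pge: "exp (- (lam * (\<Sum>i<n. (Xs i \<omega>)\<^sup>2))) \<le> P \<omega>"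
    proof -
      have "exp (- (lam * (\<Sum>i<n. (Xs i \<omega>)\<^sup>2))) = (\<Prod>i<n. exp (- (lam * (Xs i \<omega>)\<^sup>2)))"
        by (simp add: sum_distrib_left exp_sum flip: sum_negf)
      also have "\<dots> \<le> (\<Prod>i<n. g (Xs i \<omega>))"
        by (rule prod_mono) (auto simp: g_def lam mult_left_mono less_imp_le)
      finally show ?thesis using P_eq by simp
    qed
    show ?thesis
    proof (cases "(\<Sum>i<n. (Xs i \<omega>)\<^sup>2) \<le> B")
      case True
      have "1 \<le> exp (lam * B) * exp (- (lam * (\<Sum>i<n. (Xs i \<omega>)\<^sup>2)))"
        using True lam by (simp add: mult_left_mono flip: exp_add)
      also have "\<dots> \<le> \<xi> \<omega>" unfolding \<xi>_def by (rule mult_left_mono[OF Pge]) simp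
      finally show ?thesis using True by simp
    next
      case False then show ?thesis using Pnn by (simp add: \<xi>_def)
    qed
  qed
  show "capacity H E {\<omega>. (\<Sum>i<n. (Xs i \<omega>)\<^sup>2) \<le> B} \<le> ereal (exp (lam * B) * G ^ n)"
    unfolding capacity_def E\<xi>[symmetric] using \<xi>H ind by (intro Inf_lower) blast
qed

lemma G_bound:
  assumes S: "sublinear_expectation_space H E" and XH: "X \<in> H"
    and lam: "0 < lam" "lam * t^2 \<le> 1"
  shows "real_of_ereal (E (\<lambda>\<omega>. exp (- (lam * min ((X \<omega>)^2) (t^2)))))
       \<le> 1 - lam * (1 - lam * t^2 / 2) * (- real_of_ereal (E (\<lambda>\<omega>. - min ((X \<omega>)^2) (t^2))))"
proof -
  define c1 where "c1 = lam * (1 - lam * t^2 / 2)"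
  have c1: "0 < c1" unfolding c1_def using lam by (auto intro!: mult_pos_pos)
  have pw: "exp (- (lam * min (a^2) (t^2))) \<le> 1 + c1 * (- min (a^2) (t^2))" for a :: real
  proof -
    define m where "m = min (a^2) (t^2)"
    have m: "0 \<le> m" "m \<le> t^2" unfolding m_def by auto
    have "exp (- (lam * m)) \<le> 1 - lam * m + (lam * m)^2 / 2" by (rule exp_quad) (use m lam in auto)
    also have "(lam * m)^2 = lam^2 * (m * m)" by (simp add: power2_eq_square)
    also have "lam^2 * (m * m) \<le> lam^2 * (t^2 * m)" by (rule mult_left_mono) (use m in \<open>auto intro: mult_right_mono\<close>)
    finally show ?thesis unfolding c1_def m_def[symmetric] by (simp add: algebra_simps power2_eq_square)
  qed
  have gXH: "(\<lambda>\<omega>. exp (- (lam * min ((X \<omega>)^2) (t^2)))) \<in> H"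
    by (rule ssp_H_comp1[OF S XH _ g_lip]) (use lam in auto)
  have nmH: "(\<lambda>\<omega>. - min ((X \<omega>)^2) (t^2)) \<in> H" using msq_H'[OF S XH] by simp
  have c1H: "(\<lambda>\<omega>. c1 * (- min ((X \<omega>)^2) (t^2))) \<in> H" by (rule ssp_H_smul[OF S nmH])
  have "E (\<lambda>\<omega>. exp (- (lam * min ((X \<omega>)^2) (t^2)))) \<le> E (\<lambda>\<omega>. 1 + c1 * (- min ((X \<omega>)^2) (t^2)))"
    by (rule ssp_mono[OF S gXH ssp_H_add[OF S ssp_H_const[OF S] c1H]]) (rule pw)
  also have "\<dots> \<le> E (\<lambda>_. 1) + E (\<lambda>\<omega>. c1 * (- min ((X \<omega>)^2) (t^2)))"
    by (rule ssp_add[OF S ssp_H_const[OF S] c1H])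
  also have "\<dots> = 1 + ereal c1 * E (\<lambda>\<omega>. - min ((X \<omega>)^2) (t^2))"
    using ssp_const[OF S, of 1] ssp_hom[OF S nmH c1] by (simp add: one_ereal_def)
  finally have *: "E (\<lambda>\<omega>. exp (- (lam * min ((X \<omega>)^2) (t^2)))) \<le> 1 + ereal c1 * E (\<lambda>\<omega>. - min ((X \<omega>)^2) (t^2))" .
  have f1: "E (\<lambda>\<omega>. exp (- (lam * min ((X \<omega>)^2) (t^2)))) = ereal (real_of_ereal (E (\<lambda>\<omega>. exp (- (lam * min ((X \<omega>)^2) (t^2))))))"
    by (rule ssp_fin(1)[OF S gXH, of 0 1]) (use lam in auto)
  have f2: "E (\<lambda>\<omega>. - min ((X \<omega>)^2) (t^2)) = ereal (real_of_ereal (E (\<lambda>\<omega>. - min ((X \<omega>)^2) (t^2))))"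
    by (rule ssp_fin(1)[OF S nmH, of "-(t^2)" 0]) auto
  have "real_of_ereal (E (\<lambda>\<omega>. exp (- (lam * min ((X \<omega>)^2) (t^2))))) \<le> 1 + c1 * real_of_ereal (E (\<lambda>\<omega>. - min ((X \<omega>)^2) (t^2)))"
    using * by (subst (asm) f1, subst (asm) f2) (simp add: one_ereal_def)
  then show ?thesis unfolding c1_def by simp
qed



lemma final_arith:
  fixes \<rho> \<delta> a \<beta> e2 Z L nn W lam X2 :: real
  assumes "0 < \<delta>" "\<rho> = \<delta> + a" "0 < a" "0 < \<beta>" "\<beta> \<le> 1" "\<beta> * \<rho> \<le> a / 2"
    "0 < e2" "4 * e2 \<le> \<beta> * a" "0 < Z" "0 < L" "0 < nn" "W \<ge> L * \<rho> - a * L / 4"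
    "lam = \<beta> / (e2 * Z^2)" "nn * L / Z^2 \<ge> X2" "0 \<le> X2"
  shows "lam * (\<delta> * nn * L) - nn * (lam * (1 - \<beta>/2) * W) \<le> -2 * X2"
proof -
  have lam: "0 < lam" using assms by simp
  have k1: "(1 - \<beta>/2) * W \<ge> (1 - \<beta>/2) * (L * \<rho> - a * L / 4)"
    by (rule mult_left_mono) (use assms in auto)
  have k2: "(1 - \<beta>/2) * (\<rho> - a / 4) \<ge> \<delta> + a/2"
  proof -
    have e: "(1 - \<beta>/2) * (\<rho> - a / 4) = \<rho> - a/4 - \<beta>*\<rho>/2 + \<beta>*a/8" by (simp add: algebra_simps)
    have "0 \<le> \<beta> * a" using assms by simp
    then show ?thesis unfolding e using assms by linarith
  qed
  have k3: "(1 - \<beta>/2) * (L * \<rho> - a * L / 4) \<ge> L * (\<delta> + a/2)"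
  proof -
    have "L * (\<delta> + a/2) \<le> L * ((1 - \<beta>/2) * (\<rho> - a / 4))" by (rule mult_left_mono[OF k2]) (use assms in auto)
    moreover have "(1 - \<beta>/2) * (L * \<rho> - a * L / 4) = L * ((1 - \<beta>/2) * (\<rho> - a / 4))" by (simp add: field_simps)
    ultimately show ?thesis by linarith
  qed
  have "lam * (\<delta> * nn * L) - nn * (lam * (1 - \<beta>/2) * W) = lam * nn * (\<delta> * L - (1 - \<beta>/2) * W)"
    by (simp add: algebra_simps)
  also have "\<dots> \<le> lam * nn * (\<delta> * L - L * (\<delta> + a/2))"
  proof (rule mult_left_mono)
    show "\<delta> * L - (1 - \<beta> / 2) * W \<le> \<delta> * L - L * (\<delta> + a / 2)" using k1 k3 by linarith
    show "0 \<le> lam * nn" using lam assms by simp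
  qed
  also have "\<dots> = - (a/2) * (\<beta> / e2) * (nn * L / Z^2)"
  proof -
    have "lam * nn * (\<delta> * L - L * (\<delta> + a/2)) = - (a/2) * lam * nn * L" by (simp add: algebra_simps)
    also have "\<dots> = - (a/2) * (\<beta> / e2) * (nn * L / Z^2)" using assms(13) by simp
    finally show ?thesis .
  qed
  also have "\<dots> \<le> - (a/2) * (\<beta> / e2) * X2"
  proof -
    have "(a/2) * (\<beta> / e2) * X2 \<le> (a/2) * (\<beta> / e2) * (nn * L / Z^2)"
      by (rule mult_left_mono) (use assms in auto)
    then show ?thesis by simp
  qed
  also have "\<dots> \<le> -2 * X2"
  proof -
    have "2 \<le> (a/2) * (\<beta> / e2)" using assms by (simp add: field_simps)
    then have "2 * X2 \<le> (a/2) * (\<beta> / e2) * X2" by (rule mult_right_mono) (use assms in auto)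
    then show ?thesis by simp
  qed
  finally show ?thesis .
qed

lemma z_lemma:
  fixes l :: "real \<Rightarrow> real"
  assumes mono: "\<And>s s'. 0 \<le> s \<Longrightarrow> s \<le> s' \<Longrightarrow> l s \<le> l s'"
    and lpos: "0 < l (b0 + 1)" and b0: "0 \<le> b0"
    and growth: "\<And>s. 0 < s \<Longrightarrow> l s \<le> s * C"
    and y: "0 < y" and K: "b0 + 2 \<le> K" and yK: "y < l (b0 + 1) / K^2"
    and z: "z = Inf {s. s \<ge> b0 + 1 \<and> l s / s^2 \<le> y}"
  shows "K \<le> z" "y \<le> l z / z^2"
proof -
  define T where "T = {s. s \<ge> b0 + 1 \<and> l s / s^2 \<le> y}"
  have "0 < (b0+1) * C" using growth[of "b0+1"] lpos b0 by fastforce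
  then have C: "0 < C" using b0 by (simp add: zero_less_mult_iff)
  define s0 where "s0 = max (b0 + 1) (C / y)"
  have s0pos: "0 < s0" unfolding s0_def using b0 by linarith
  have "l s0 / s0^2 \<le> s0 * C / s0^2" by (rule divide_right_mono[OF growth[OF s0pos]]) simp
  also have "\<dots> = C / s0" using s0pos by (simp add: power2_eq_square)
  also have "\<dots> \<le> C / (C / y)" by (rule divide_left_mono) (use C y s0pos in \<open>auto simp: s0_def\<close>)
  also have "\<dots> = y" using C by simp
  finally have "s0 \<in> T" unfolding T_def s0_def by auto
  then have ne: "T \<noteq> {}" by auto
  have bdd: "bdd_below T" unfolding T_def by (rule bdd_belowI[of _ "b0+1"]) auto
  have geK: "K \<le> s" if "s \<in> T" for s
  proof (rule ccontr)
    assume "\<not> K \<le> s"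
    then have sK: "s < K" by simp
    have s1: "b0 + 1 \<le> s" and sy: "l s / s^2 \<le> y" using that unfolding T_def by auto
    have spos: "0 < s" using s1 b0 by linarith
    have "l (b0+1) \<le> l s" by (rule mono) (use b0 s1 in auto)
    have "s^2 \<le> K^2" using sK spos by (intro power_mono) auto
    have "l (b0+1) / K^2 \<le> l s / K^2" using \<open>l (b0+1) \<le> l s\<close> by (simp add: divide_right_mono)
    also have "\<dots> \<le> l s / s^2" using \<open>s^2 \<le> K^2\<close> spos lpos \<open>l (b0+1) \<le> l s\<close> sK
      by (intro divide_left_mono) (auto intro!: mult_pos_pos)
    finally show False using sy yK by linarith
  qed
  show Kz: "K \<le> z" unfolding z T_def[symmetric] by (rule cInf_greatest[OF ne geK])
  show "y \<le> l z / z^2"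
  proof (rule ccontr)
    assume "\<not> y \<le> l z / z^2"
    have zpos: "0 < z" using Kz K b0 by linarith
    have lz: "0 < l z" using mono[of "b0+1" z] lpos Kz K b0 by linarith
    have lzy: "l z < y * z^2" using \<open>\<not> y \<le> l z / z^2\<close> zpos by (simp add: field_simps)
    define q where "q = l z / y"
    have q: "0 < q" "q < z^2" unfolding q_def using lz y lzy by (auto simp: field_simps)
    have sq: "sqrt q < z" using q zpos by (metis real_sqrt_less_iff real_sqrt_abs abs_of_pos)
    define s where "s = max (b0 + 1) ((sqrt q + z) / 2)"
    have sz: "s < z" unfolding s_def using sq Kz K by auto
    have s1: "b0 + 1 \<le> s" unfolding s_def by auto
    have sT: "s \<notin> T"
    proof
      assume "s \<in> T" then have "z \<le> s" unfolding z T_def[symmetric] by (rule cInf_lower[OF _ bdd])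
      then show False using sz by simp
    qed
    then have "y < l s / s^2" using s1 unfolding T_def by auto
    moreover have spos: "0 < s" using s1 b0 by linarith
    ultimately have ls: "y * s^2 < l s" by (simp add: field_simps)
    have "sqrt q < s" unfolding s_def using sq by (simp add: less_max_iff_disj)
    then have "(sqrt q)^2 < s^2" using q by (intro power_strict_mono) auto
    then have "q < s^2" using q by simp
    then have "l z < y * s^2" unfolding q_def using y by (simp add: field_simps)
    moreover have "l s \<le> l z" by (rule mono) (use spos sz in auto)
    ultimately show False using ls by linarith
  qed
qed



lemma ereal_le_real: fixes A B :: ereal
  shows "A = ereal (real_of_ereal A) \<Longrightarrow> B = ereal (real_of_ereal B) \<Longrightarrow> A \<le> B \<Longrightarrow> real_of_ereal A \<le> real_of_ereal B"
  by (cases A; cases B) auto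

lemma ereal_add_real: fixes A B C :: ereal
  shows "A = ereal (real_of_ereal A) \<Longrightarrow> B = ereal (real_of_ereal B) \<Longrightarrow> C = ereal (real_of_ereal C)
   \<Longrightarrow> C \<le> A + B \<Longrightarrow> real_of_ereal C \<le> real_of_ereal A + real_of_ereal B"
  by (cases A; cases B; cases C) auto

lemma cap_fin:
  assumes S: "sublinear_expectation_space H E"
  shows "capacity H E A = ereal (real_of_ereal (capacity H E A)) \<and> 0 \<le> real_of_ereal (capacity H E A)"
proof -
  have "E (\<lambda>_. 1) \<in> {E \<xi> | \<xi>. \<xi> \<in> H \<and> (\<forall>\<omega>. indicator A \<omega> \<le> \<xi> \<omega>)}"
    using ssp_H_const[OF S, of 1] by (auto simp: indicator_def)
  then have "capacity H E A \<le> E (\<lambda>_. 1)" unfolding capacity_def by (rule Inf_lower)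
  then have le1: "capacity H E A \<le> 1" using ssp_const[OF S, of 1] by (simp add: one_ereal_def)
  have ge0: "0 \<le> capacity H E A"
    unfolding capacity_def
  proof (rule Inf_greatest, clarify)
    fix \<xi> assume "\<xi> \<in> H" "\<forall>\<omega>. indicator A \<omega> \<le> \<xi> \<omega>"
    note hyp = this
    have nn: "0 \<le> \<xi> \<omega>" for \<omega>
    proof -
      have "(0::real) \<le> indicator A \<omega>" by (simp add: indicator_def)
      also have "\<dots> \<le> \<xi> \<omega>" using hyp(2) by blast
      finally show ?thesis .
    qed
    have "E (\<lambda>_. 0) \<le> E \<xi>"
      by (rule ssp_mono[OF S ssp_H_const[OF S] hyp(1)]) (rule nn)
    then show "0 \<le> E \<xi>" using ssp_const[OF S, of 0] by (simp add: zero_ereal_def)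
  qed
  show ?thesis using le1 ge0 by (cases "capacity H E A") auto
qed

lemma diff_cap:
  assumes S: "sublinear_expectation_space H E" and XH: "X \<in> H" and t: "0 < t" "t \<le> z"
  shows "(\<lambda>\<omega>. min ((X \<omega>)^2) (z^2) - min ((X \<omega>)^2) (t^2)) \<in> H"
    "E (\<lambda>\<omega>. min ((X \<omega>)^2) (z^2) - min ((X \<omega>)^2) (t^2)) = ereal (real_of_ereal (E (\<lambda>\<omega>. min ((X \<omega>)^2) (z^2) - min ((X \<omega>)^2) (t^2))))"
    "real_of_ereal (E (\<lambda>\<omega>. min ((X \<omega>)^2) (z^2) - min ((X \<omega>)^2) (t^2)))
       \<le> z^2 * real_of_ereal (capacity H E {\<omega>. \<bar>X \<omega>\<bar> \<ge> t})"
proof -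
  define D where "D = (\<lambda>\<omega>. min ((X \<omega>)^2) (z^2) - min ((X \<omega>)^2) (t^2))"
  have "(\<lambda>\<omega>. min ((X \<omega>)^2) (z^2) + (- min ((X \<omega>)^2) (t^2))) \<in> H"
    using msq_H'[OF S XH] by (intro ssp_H_add[OF S]) auto
  then show DH: "(\<lambda>\<omega>. min ((X \<omega>)^2) (z^2) - min ((X \<omega>)^2) (t^2)) \<in> H" by simp
  have tz2: "t^2 \<le> z^2" using t by (intro power_mono) auto
  have Db: "0 \<le> D \<omega>" "D \<omega> \<le> z^2" for \<omega>
  proof -
    have "0 \<le> min ((X \<omega>)^2) (t^2)" "min ((X \<omega>)^2) (z^2) \<le> z^2"
      "min ((X \<omega>)^2) (t^2) \<le> min ((X \<omega>)^2) (z^2)" using tz2 by auto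
    then show "0 \<le> D \<omega>" "D \<omega> \<le> z^2" unfolding D_def by linarith+
  qed
  have Dind: "D \<omega> \<le> z^2 * indicator {\<omega>. \<bar>X \<omega>\<bar> \<ge> t} \<omega>" for \<omega>
  proof (cases "\<bar>X \<omega>\<bar> \<ge> t")
    case True then show ?thesis using Db[of \<omega>] by simp
  next
    case False
    then have "\<bar>X \<omega>\<bar> \<le> \<bar>t\<bar>" using t by simp
    then have "(X \<omega>)^2 \<le> t^2" by (simp add: abs_le_square_iff)
    then show ?thesis unfolding D_def using tz2 by (simp add: min_def)
  qed
  note fD = ssp_fin[OF S DH[folded D_def] Db]
  show "E (\<lambda>\<omega>. min ((X \<omega>)^2) (z^2) - min ((X \<omega>)^2) (t^2)) = ereal (real_of_ereal (E (\<lambda>\<omega>. min ((X \<omega>)^2) (z^2) - min ((X \<omega>)^2) (t^2))))"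
    using fD(1) unfolding D_def .
  define d where "d = real_of_ereal (E D)"
  have zpos: "0 < z^2" using t by simp
  have "ereal (d / z^2) \<le> capacity H E {\<omega>. \<bar>X \<omega>\<bar> \<ge> t}"
    unfolding capacity_def
  proof (rule Inf_greatest, clarify)
    fix \<xi> assume \<xi>H: "\<xi> \<in> H" and \<xi>i: "\<forall>\<omega>. indicator {\<omega>. \<bar>X \<omega>\<bar> \<ge> t} \<omega> \<le> \<xi> \<omega>"
    have "E D \<le> E (\<lambda>\<omega>. z^2 * \<xi> \<omega>)"
    proof (rule ssp_mono[OF S DH[folded D_def] ssp_H_smul[OF S \<xi>H]])
      fix \<omega> show "D \<omega> \<le> z^2 * \<xi> \<omega>"
        using Dind[of \<omega>] \<xi>i mult_left_mono[of "indicator {\<omega>. \<bar>X \<omega>\<bar> \<ge> t} \<omega>" "\<xi> \<omega>" "z^2"] by force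
    qed
    also have "\<dots> = ereal (z^2) * E \<xi>" by (rule ssp_hom[OF S \<xi>H zpos])
    finally have *: "ereal d \<le> ereal (z^2) * E \<xi>" using fD(1) unfolding d_def by simp
    show "ereal (d / z^2) \<le> E \<xi>"
    proof (cases "E \<xi>")
      case (real v)
      then have "d \<le> z^2 * v" using * by simp
      then show ?thesis using real zpos by (simp add: field_simps)
    next
      case PInf then show ?thesis by simp
    next
      case MInf then show ?thesis using * zpos by simp
    qed
  qed
  then have "d / z^2 \<le> real_of_ereal (capacity H E {\<omega>. \<bar>X \<omega>\<bar> \<ge> t})"
    using ereal_le_real[of "ereal (d / z^2)" "capacity H E {\<omega>. \<bar>X \<omega>\<bar> \<ge> t}"] cap_fin[OF S, of "{\<omega>. \<bar>X \<omega>\<bar> \<ge> t}"] by simp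
  then show "real_of_ereal (E (\<lambda>\<omega>. min ((X \<omega>)^2) (z^2) - min ((X \<omega>)^2) (t^2)))
       \<le> z^2 * real_of_ereal (capacity H E {\<omega>. \<bar>X \<omega>\<bar> \<ge> t})"
    using zpos unfolding d_def D_def by (simp add: field_simps)
qed

lemma lower_shift:
  assumes S: "sublinear_expectation_space H E" and XH: "X \<in> H" and t: "0 < t" "t \<le> z"
  shows "real_of_ereal (E (\<lambda>\<omega>. - min ((X \<omega>)^2) (t^2)))
     \<le> real_of_ereal (E (\<lambda>\<omega>. - min ((X \<omega>)^2) (z^2))) + real_of_ereal (E (\<lambda>\<omega>. min ((X \<omega>)^2) (z^2) - min ((X \<omega>)^2) (t^2)))"
proof -
  note dc = diff_cap[OF S XH t]
  have nz: "(\<lambda>\<omega>. - min ((X \<omega>)^2) (z^2)) \<in> H" and nt: "(\<lambda>\<omega>. - min ((X \<omega>)^2) (t^2)) \<in> H"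
    using msq_H'[OF S XH] by auto
  have fz: "E (\<lambda>\<omega>. - min ((X \<omega>)^2) (z^2)) = ereal (real_of_ereal (E (\<lambda>\<omega>. - min ((X \<omega>)^2) (z^2))))"
    by (rule ssp_fin(1)[OF S nz, of "-(z^2)" 0]) auto
  have ft: "E (\<lambda>\<omega>. - min ((X \<omega>)^2) (t^2)) = ereal (real_of_ereal (E (\<lambda>\<omega>. - min ((X \<omega>)^2) (t^2))))"
    by (rule ssp_fin(1)[OF S nt, of "-(t^2)" 0]) auto
  have "E (\<lambda>\<omega>. - min ((X \<omega>)^2) (t^2)) = E (\<lambda>\<omega>. - min ((X \<omega>)^2) (z^2) + (min ((X \<omega>)^2) (z^2) - min ((X \<omega>)^2) (t^2)))"
    by simp
  also have "\<dots> \<le> E (\<lambda>\<omega>. - min ((X \<omega>)^2) (z^2)) + E (\<lambda>\<omega>. min ((X \<omega>)^2) (z^2) - min ((X \<omega>)^2) (t^2))"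
    by (rule ssp_add[OF S nz dc(1)])
  finally show ?thesis by (rule ereal_add_real[OF fz dc(2) ft])
qed

lemma l_props:
  assumes S: "sublinear_expectation_space H E" and XH: "X \<in> H"
  shows "E (\<lambda>\<omega>. min ((X \<omega>)^2) (s^2)) = ereal (real_of_ereal (E (\<lambda>\<omega>. min ((X \<omega>)^2) (s^2))))"
    "0 \<le> real_of_ereal (E (\<lambda>\<omega>. min ((X \<omega>)^2) (s^2)))"
    "E (\<lambda>\<omega>. - min ((X \<omega>)^2) (s^2)) = ereal (real_of_ereal (E (\<lambda>\<omega>. - min ((X \<omega>)^2) (s^2))))"
    "- real_of_ereal (E (\<lambda>\<omega>. - min ((X \<omega>)^2) (s^2))) \<le> real_of_ereal (E (\<lambda>\<omega>. min ((X \<omega>)^2) (s^2)))"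
    "0 \<le> s \<Longrightarrow> s \<le> s' \<Longrightarrow> real_of_ereal (E (\<lambda>\<omega>. min ((X \<omega>)^2) (s^2))) \<le> real_of_ereal (E (\<lambda>\<omega>. min ((X \<omega>)^2) (s'^2)))"
proof -
  note H1 = msq_H'[OF S XH]
  have f1: "E (\<lambda>\<omega>. min ((X \<omega>)^2) (s^2)) = ereal (real_of_ereal (E (\<lambda>\<omega>. min ((X \<omega>)^2) (s^2))))"
     "0 \<le> real_of_ereal (E (\<lambda>\<omega>. min ((X \<omega>)^2) (s^2)))"
    using ssp_fin[OF S H1(1)[of s], of 0 "s^2"] by auto
  have f2: "E (\<lambda>\<omega>. - min ((X \<omega>)^2) (s^2)) = ereal (real_of_ereal (E (\<lambda>\<omega>. - min ((X \<omega>)^2) (s^2))))"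
    using ssp_fin[OF S H1(2)[of s], of "-(s^2)" 0] by auto
  show "E (\<lambda>\<omega>. min ((X \<omega>)^2) (s^2)) = ereal (real_of_ereal (E (\<lambda>\<omega>. min ((X \<omega>)^2) (s^2))))"
    "0 \<le> real_of_ereal (E (\<lambda>\<omega>. min ((X \<omega>)^2) (s^2)))" using f1 by auto
  show f2': "E (\<lambda>\<omega>. - min ((X \<omega>)^2) (s^2)) = ereal (real_of_ereal (E (\<lambda>\<omega>. - min ((X \<omega>)^2) (s^2))))"
    using f2 by auto
  have "E (\<lambda>_. 0) = E (\<lambda>\<omega>. min ((X \<omega>)^2) (s^2) + - min ((X \<omega>)^2) (s^2))" by simp
  also have "\<dots> \<le> E (\<lambda>\<omega>. min ((X \<omega>)^2) (s^2)) + E (\<lambda>\<omega>. - min ((X \<omega>)^2) (s^2))"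
    by (rule ssp_add[OF S H1(1) H1(2)])
  finally have "ereal 0 \<le> E (\<lambda>\<omega>. min ((X \<omega>)^2) (s^2)) + E (\<lambda>\<omega>. - min ((X \<omega>)^2) (s^2))"
    using ssp_const[OF S, of 0] by simp
  then show "- real_of_ereal (E (\<lambda>\<omega>. - min ((X \<omega>)^2) (s^2))) \<le> real_of_ereal (E (\<lambda>\<omega>. min ((X \<omega>)^2) (s^2)))"
    using ereal_add_real[OF f1(1) f2' _ \<open>ereal 0 \<le> _\<close>] by simp
  assume ss: "0 \<le> s" "s \<le> s'"
  have "E (\<lambda>\<omega>. min ((X \<omega>)^2) (s^2)) \<le> E (\<lambda>\<omega>. min ((X \<omega>)^2) (s'^2))"
  proof (rule ssp_mono[OF S H1(1) H1(1)])
    fix \<omega> have "s^2 \<le> s'^2" using ss by (intro power_mono) auto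
    then show "min ((X \<omega>)^2) (s^2) \<le> min ((X \<omega>)^2) (s'^2)" by simp
  qed
  then show "real_of_ereal (E (\<lambda>\<omega>. min ((X \<omega>)^2) (s^2))) \<le> real_of_ereal (E (\<lambda>\<omega>. min ((X \<omega>)^2) (s'^2)))"
  proof -
    have "E (\<lambda>\<omega>. min ((X \<omega>)^2) (s'^2)) = ereal (real_of_ereal (E (\<lambda>\<omega>. min ((X \<omega>)^2) (s'^2))))"
      by (rule ssp_fin(1)[OF S H1(1)[of s'], of 0 "s'^2"]) auto
    then show ?thesis using ereal_le_real[OF f1(1)] \<open>E _ \<le> E _\<close> by blast
  qed
qed

lemma growth:
  assumes S: "sublinear_expectation_space H E" and XH: "X \<in> H"
    and condIII: "((\<lambda>c. E (\<lambda>\<omega>. max (\<bar>X \<omega>\<bar> - c) 0)) \<longlongrightarrow> 0) at_top"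
  obtains C where "\<And>s. 0 < s \<Longrightarrow> real_of_ereal (E (\<lambda>\<omega>. min ((X \<omega>)^2) (s^2))) \<le> s * C"
proof -
  have "eventually (\<lambda>c. E (\<lambda>\<omega>. max (\<bar>X \<omega>\<bar> - c) 0) < 1) at_top"
    using order_tendstoD(2)[OF condIII, of 1] by simp
  then obtain N where N: "\<And>c. c \<ge> N \<Longrightarrow> E (\<lambda>\<omega>. max (\<bar>X \<omega>\<bar> - c) 0) < 1"
    by (auto simp: eventually_at_top_linorder)
  define c0 where "c0 = max N 0"
  have c0: "0 \<le> c0" "E (\<lambda>\<omega>. max (\<bar>X \<omega>\<bar> - c0) 0) < 1" using N[of c0] unfolding c0_def by auto
  define M where "M = (\<lambda>\<omega>. max (\<bar>X \<omega>\<bar> - c0) 0)"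
  have MH: "M \<in> H" unfolding M_def by (rule ssp_H_comp1[OF S XH, of 1]) auto
  have "E (\<lambda>_. 0) \<le> E M" by (rule ssp_mono[OF S ssp_H_const[OF S] MH]) (simp add: M_def)
  then have EM0: "0 \<le> E M" using ssp_const[OF S, of 0] by (simp add: zero_ereal_def)
  then obtain v where v: "E M = ereal v" "v < 1" using c0(2) unfolding M_def[symmetric]
    by (cases "E M") auto
  show ?thesis
  proof (rule that)
    fix s :: real assume s: "0 < s"
    have RH: "(\<lambda>\<omega>. s * c0 + s * M \<omega>) \<in> H"
      by (intro ssp_H_add[OF S] ssp_H_const[OF S] ssp_H_smul[OF S MH])
    have pw: "min ((X \<omega>)^2) (s^2) \<le> s * c0 + s * M \<omega>" for \<omega>
    proof -
      have "min ((X \<omega>)^2) (s^2) \<le> s * \<bar>X \<omega>\<bar>"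
      proof (cases "\<bar>X \<omega>\<bar> \<le> s")
        case True
        then have "\<bar>X \<omega>\<bar> * \<bar>X \<omega>\<bar> \<le> s * \<bar>X \<omega>\<bar>" by (intro mult_right_mono) auto
        then show ?thesis by (simp add: power2_eq_square abs_mult[symmetric])
      next
        case False
        then have "s * s \<le> s * \<bar>X \<omega>\<bar>" using s by (intro mult_left_mono) auto
        then show ?thesis by (simp add: power2_eq_square)
      qed
      also have "\<dots> \<le> s * (c0 + M \<omega>)" using s unfolding M_def by (intro mult_left_mono) auto
      finally show ?thesis by (simp add: algebra_simps)
    qed
    have "E (\<lambda>\<omega>. min ((X \<omega>)^2) (s^2)) \<le> E (\<lambda>\<omega>. s * c0 + s * M \<omega>)"
      by (rule ssp_mono[OF S msq_H'(1)[OF S XH] RH pw])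
    also have "\<dots> \<le> E (\<lambda>_. s * c0) + E (\<lambda>\<omega>. s * M \<omega>)"
      by (rule ssp_add[OF S ssp_H_const[OF S] ssp_H_smul[OF S MH]])
    also have "\<dots> = ereal (s * c0 + s * v)" using ssp_const[OF S] ssp_hom[OF S MH s] v by simp
    finally have "real_of_ereal (E (\<lambda>\<omega>. min ((X \<omega>)^2) (s^2))) \<le> s * c0 + s * v"
      using ereal_le_real[OF l_props(1)[OF S XH, of s], of "ereal (s * c0 + s * v)"] by simp
    also have "\<dots> \<le> s * (c0 + 1)" using v s by (simp add: algebra_simps)
    finally show "real_of_ereal (E (\<lambda>\<omega>. min ((X \<omega>)^2) (s^2))) \<le> s * (c0 + 1)" .
  qed
qed



theorem proposition4p3:
  fixes H :: "('a \<Rightarrow> real) set" and E :: "('a \<Rightarrow> real) \<Rightarrow> ereal"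
    and X :: "'a \<Rightarrow> real" and Xs :: "nat \<Rightarrow> 'a \<Rightarrow> real"
    and r :: real and x :: "nat \<Rightarrow> real"
    and l :: "real \<Rightarrow> real" and b0 :: real and z :: "nat \<Rightarrow> real"
  assumes space: "sublinear_expectation_space H E"
    and XH: "X \<in> H" and XsH: "\<And>n. Xs n \<in> H"
    and indep: "indep_seq H E Xs"
    and distr: "\<And>n. ident_distr E (Xs n) X"
    and mean0: "E X = 0" "lower_exp E X = 0"
    and l_def: "\<And>t. l t = real_of_ereal (E (\<lambda>\<omega>. min ((X \<omega>)\<^sup>2) (t\<^sup>2)))"
    and condI: "(\<lambda>t. real_of_ereal (capacity H E {\<omega>. \<bar>X \<omega>\<bar> \<ge> t})) \<in> o[at_top](\<lambda>t. l t / t\<^sup>2)"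
    and r_pos: "0 < r"
    and condII: "Limsup at_top (\<lambda>t. ratio_inf (E (\<lambda>\<omega>. min ((X \<omega>)\<^sup>2) (t\<^sup>2)))
                                       (lower_exp E (\<lambda>\<omega>. min ((X \<omega>)\<^sup>2) (t\<^sup>2)))) < ereal (r\<^sup>2)"
    and condIII: "((\<lambda>c. E (\<lambda>\<omega>. max (\<bar>X \<omega>\<bar> - c) 0)) \<longlongrightarrow> 0) at_top"
    and condIV: "filterlim x at_top sequentially" "x \<in> o(\<lambda>n. sqrt (real n))"
    and b0_def: "b0 = Inf {t. t \<ge> 0 \<and> l t > 0}"
    and z_def: "\<And>n. z n = Inf {s. s \<ge> b0 + 1 \<and> l s / s\<^sup>2 \<le> (x n)\<^sup>2 / real n}"
  shows "\<forall>\<delta>. 0 < \<delta> \<and> \<delta> < 1 / r\<^sup>2 \<longrightarrow>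
           (\<forall>\<^sub>F n in sequentially.
              capacity H E {\<omega>. (\<Sum>i<n. (Xs i \<omega>)\<^sup>2) \<le> \<delta> * real n * l (z n)}
                \<le> ereal (exp (- 2 * (x n)\<^sup>2)))"
proof (intro allI impI)
  fix \<delta> :: real assume \<delta>: "0 < \<delta> \<and> \<delta> < 1 / r\<^sup>2"
  define a where "a = 1 / r\<^sup>2 - \<delta>"
  define \<beta> where "\<beta> = min 1 (a * r\<^sup>2 / 2)"
  define e2 where "e2 = min 1 (\<beta> * a / 4)"
  define \<epsilon> where "\<epsilon> = sqrt e2"
  define c where "c = a * e2 / 4"
  have r2: "0 < r\<^sup>2" using r_pos by simp
  have a: "0 < a" using \<delta> a_def by simp
  have \<beta>: "0 < \<beta>" "\<beta> \<le> 1" using a r2 unfolding \<beta>_def by auto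
  have \<beta>3: "\<beta> * (1 / r\<^sup>2) \<le> a / 2"
  proof -
    have "\<beta> \<le> a * r\<^sup>2 / 2" unfolding \<beta>_def by simp
    then have "\<beta> * (1 / r\<^sup>2) \<le> (a * r\<^sup>2 / 2) * (1 / r\<^sup>2)" using r2 by (intro mult_right_mono) auto
    then show ?thesis using r2 by simp
  qed
  have e2: "0 < e2" "e2 \<le> 1" "4 * e2 \<le> \<beta> * a" using a \<beta> unfolding e2_def by auto
  have \<epsilon>: "0 < \<epsilon>" "\<epsilon> \<le> 1" "\<epsilon>\<^sup>2 = e2" using e2 unfolding \<epsilon>_def by auto
  have c: "0 < c" using a e2 unfolding c_def by simp
  define lw where "lw = (\<lambda>s. - real_of_ereal (E (\<lambda>\<omega>. - min ((X \<omega>)\<^sup>2) (s\<^sup>2))))"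
  note LP = l_props[OF space XH]
  have lE: "E (\<lambda>\<omega>. min ((X \<omega>)\<^sup>2) (s\<^sup>2)) = ereal (l s)" for s unfolding l_def by (rule LP(1))
  have lmono: "\<And>s s'. 0 \<le> s \<Longrightarrow> s \<le> s' \<Longrightarrow> l s \<le> l s'" unfolding l_def by (rule LP(5))
  have l0: "0 \<le> l s" for s unfolding l_def by (rule LP(2))
  have wl: "lw s \<le> l s" for s unfolding l_def lw_def by (rule LP(4))
  have lowerE: "lower_exp E (\<lambda>\<omega>. min ((X \<omega>)\<^sup>2) (s\<^sup>2)) = ereal (lw s)" for s
    unfolding lower_exp_def lw_def by (subst LP(3)) simp
  have "eventually (\<lambda>s. ratio_inf (E (\<lambda>\<omega>. min ((X \<omega>)\<^sup>2) (s\<^sup>2)))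
                                  (lower_exp E (\<lambda>\<omega>. min ((X \<omega>)\<^sup>2) (s\<^sup>2))) < ereal (r\<^sup>2)) at_top"
    by (rule Limsup_lessD[OF condII])
  then obtain N2 where N2: "\<And>s. s \<ge> N2 \<Longrightarrow> ratio_inf (E (\<lambda>\<omega>. min ((X \<omega>)\<^sup>2) (s\<^sup>2)))
                                  (lower_exp E (\<lambda>\<omega>. min ((X \<omega>)\<^sup>2) (s\<^sup>2))) < ereal (r\<^sup>2)"
    by (auto simp: eventually_at_top_linorder)
  have II: "0 < lw s \<and> l s < r\<^sup>2 * lw s" if "s \<ge> N2" for s
  proof -
    have *: "ratio_inf (ereal (l s)) (ereal (lw s)) < ereal (r\<^sup>2)" using N2[OF that] unfolding lE lowerE .
    then have "0 < lw s" unfolding ratio_inf_def by (auto split: if_splits)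
    moreover then have "l s / lw s < r\<^sup>2" using * unfolding ratio_inf_def by simp
    ultimately show ?thesis by (simp add: divide_less_eq)
  qed
  have "eventually (\<lambda>s. norm (real_of_ereal (capacity H E {\<omega>. \<bar>X \<omega>\<bar> \<ge> s})) \<le> c * norm (l s / s\<^sup>2)) at_top"
    by (rule landau_o.smallD[OF condI c])
  then obtain N1 where N1: "\<And>s. s \<ge> N1 \<Longrightarrow> norm (real_of_ereal (capacity H E {\<omega>. \<bar>X \<omega>\<bar> \<ge> s})) \<le> c * norm (l s / s\<^sup>2)"
    by (auto simp: eventually_at_top_linorder)
  have I: "real_of_ereal (capacity H E {\<omega>. \<bar>X \<omega>\<bar> \<ge> s}) \<le> c * (l s / s\<^sup>2)" if "s \<ge> N1" for s
  proof -
    have h: "real_of_ereal (capacity H E {\<omega>. \<bar>X \<omega>\<bar> \<ge> s}) \<le> norm (real_of_ereal (capacity H E {\<omega>. \<bar>X \<omega>\<bar> \<ge> s}))"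
      by (simp only: real_norm_def abs_ge_self)
    have e: "norm (l s / s\<^sup>2) = l s / s\<^sup>2" using l0[of s] by simp
    have "norm (real_of_ereal (capacity H E {\<omega>. \<bar>X \<omega>\<bar> \<ge> s})) \<le> c * (l s / s\<^sup>2)"
      using N1[OF that] unfolding e .
    then show ?thesis using h by linarith
  qed
  define T0 where "T0 = {t. t \<ge> 0 \<and> l t > 0}"
  have t1: "max N2 1 \<in> T0" using II[of "max N2 1"] wl[of "max N2 1"] unfolding T0_def by auto
  have T0ne: "T0 \<noteq> {}" using t1 by auto
  have b0': "b0 = Inf T0" using b0_def unfolding T0_def .
  have b0: "0 \<le> b0" unfolding b0' by (rule cInf_greatest[OF T0ne]) (auto simp: T0_def)
  obtain t0 where t0: "t0 \<in> T0" "t0 < b0 + 1"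
    using cInf_lessD[OF T0ne, of "b0 + 1"] b0' by auto
  have lpos: "0 < l (b0 + 1)" using t0 lmono[of t0 "b0+1"] unfolding T0_def by auto
  obtain C where C0: "\<And>s. 0 < s \<Longrightarrow> real_of_ereal (E (\<lambda>\<omega>. min ((X \<omega>)\<^sup>2) (s\<^sup>2))) \<le> s * C"
    using growth[OF space XH condIII] by blast
  have C: "\<And>s. 0 < s \<Longrightarrow> l s \<le> s * C" using C0 l_def by simp
  define K where "K = max (b0 + 2) (max N2 (N1 / \<epsilon>))"
  define q where "q = l (b0 + 1) / K\<^sup>2"
  have Kpos: "0 < K" unfolding K_def using b0 by simp
  have q: "0 < q" unfolding q_def using lpos Kpos by simp
  define c' where "c' = sqrt q / 2"
  have c': "0 < c'" "c'\<^sup>2 = q / 4" unfolding c'_def using q by (auto simp: power_divide)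
  have ev1: "eventually (\<lambda>n. 1 \<le> x n) sequentially" using condIV(1) unfolding filterlim_at_top by blast
  have ev2: "eventually (\<lambda>n. norm (x n) \<le> c' * norm (sqrt (real n))) sequentially"
    by (rule landau_o.smallD[OF condIV(2) c'(1)])
  have ev3: "eventually (\<lambda>n. 1 \<le> n) sequentially" by (rule eventually_ge_at_top)
  show "\<forall>\<^sub>F n in sequentially.
              capacity H E {\<omega>. (\<Sum>i<n. (Xs i \<omega>)\<^sup>2) \<le> \<delta> * real n * l (z n)}
                \<le> ereal (exp (- 2 * (x n)\<^sup>2))"
    using ev1 ev2 ev3
  proof eventually_elim
    case (elim n)
    have n: "0 < real n" using elim(3) by simp
    define y where "y = (x n)\<^sup>2 / real n"
    have y: "0 < y" unfolding y_def using elim(1) n by simp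
    have "\<bar>x n\<bar> \<le> c' * sqrt (real n)" using elim(2) by simp
    then have "\<bar>x n\<bar>\<^sup>2 \<le> (c' * sqrt (real n))\<^sup>2" by (intro power_mono) auto
    then have "(x n)\<^sup>2 \<le> c'\<^sup>2 * real n" by (simp add: power_mult_distrib)
    then have "y \<le> c'\<^sup>2" unfolding y_def using n by (simp add: divide_le_eq)
    then have yq: "y < l (b0 + 1) / K\<^sup>2" using c' q unfolding q_def by simp
    have Kge: "b0 + 2 \<le> K" unfolding K_def by simp
    have zdef: "z n = Inf {s. s \<ge> b0 + 1 \<and> l s / s\<^sup>2 \<le> y}" using z_def[of n] unfolding y_def .
    note zl = z_lemma[OF lmono lpos b0 C y Kge yq zdef]
    define Z where "Z = z n"
    define T where "T = \<epsilon> * Z"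
    have ZK: "K \<le> Z" using zl(1) unfolding Z_def .
    have Zpos: "0 < Z" using ZK Kpos by simp
    have ZN2: "N2 \<le> Z" using ZK unfolding K_def by simp
    have TN1: "N1 \<le> T"
    proof -
      have "N1 / \<epsilon> \<le> Z" using ZK unfolding K_def by simp
      then have "\<epsilon> * (N1 / \<epsilon>) \<le> \<epsilon> * Z" using \<epsilon> by (intro mult_left_mono) auto
      then show ?thesis unfolding T_def using \<epsilon> by simp
    qed
    have Tpos: "0 < T" unfolding T_def using \<epsilon> Zpos by simp
    have TZ: "T \<le> Z" unfolding T_def using \<epsilon> Zpos by (simp add: mult_le_cancel_right1)
    have T2: "T\<^sup>2 = e2 * Z\<^sup>2" unfolding T_def using \<epsilon> by (simp add: power_mult_distrib)
    define L where "L = l Z"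
    have Lpos: "0 < L" unfolding L_def using lmono[of "b0+1" Z] lpos ZK Kge b0 by simp
    have IIZ: "0 < lw Z" "L < r\<^sup>2 * lw Z" using II[OF ZN2] unfolding L_def by auto
    have lwZ: "L * (1 / r\<^sup>2) \<le> lw Z" using IIZ r2 by (simp add: field_simps)
    define dZT where "dZT = real_of_ereal (E (\<lambda>\<omega>. min ((X \<omega>)\<^sup>2) (Z\<^sup>2) - min ((X \<omega>)\<^sup>2) (T\<^sup>2)))"
    have "dZT \<le> Z\<^sup>2 * real_of_ereal (capacity H E {\<omega>. \<bar>X \<omega>\<bar> \<ge> T})"
      unfolding dZT_def by (rule diff_cap(3)[OF space XH Tpos TZ])
    also have "\<dots> \<le> Z\<^sup>2 * (c * (l T / T\<^sup>2))" by (rule mult_left_mono[OF I[OF TN1]]) simp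
    also have "\<dots> = c * l T / e2" using T2 Zpos e2 by (simp add: field_simps)
    also have "\<dots> \<le> c * L / e2" unfolding L_def using lmono[of T Z] Tpos TZ c e2
      by (intro divide_right_mono mult_left_mono) auto
    also have "\<dots> = a * L / 4" unfolding c_def using e2 by simp
    finally have dZT: "dZT \<le> a * L / 4" .
    have "real_of_ereal (E (\<lambda>\<omega>. - min ((X \<omega>)\<^sup>2) (T\<^sup>2)))
        \<le> real_of_ereal (E (\<lambda>\<omega>. - min ((X \<omega>)\<^sup>2) (Z\<^sup>2))) + dZT"
      unfolding dZT_def by (rule lower_shift[OF space XH Tpos TZ])
    then have lwT: "lw T \<ge> L * (1 / r\<^sup>2) - a * L / 4" using lwZ dZT unfolding lw_def by linarith
    define lam where "lam = \<beta> / (e2 * Z\<^sup>2)"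
    have lam: "0 < lam" unfolding lam_def using \<beta> e2 Zpos by simp
    have lamT: "lam * T\<^sup>2 = \<beta>" unfolding lam_def T2 using e2 Zpos by simp
    define G where "G = real_of_ereal (E (\<lambda>\<omega>. exp (- (lam * min ((X \<omega>)^2) (T^2)))))"
    note cb = cap_bound(1)[OF space XsH XH indep distr lam G_def, of n "\<delta> * real n * l (z n)"]
      cap_bound(2)[OF space XsH XH indep distr lam G_def]
    have Gb: "G \<le> 1 - lam * (1 - lam * T^2 / 2) * lw T"
      unfolding G_def lw_def by (rule G_bound[OF space XH lam]) (use lamT \<beta> in simp)
    then have Gb': "G \<le> 1 + (- (lam * (1 - \<beta> / 2) * lw T))" using lamT by simp
    also have "\<dots> \<le> exp (- (lam * (1 - \<beta> / 2) * lw T))" by (rule exp_ge_add_one_self)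
    finally have Gexp: "G \<le> exp (- (lam * (1 - \<beta> / 2) * lw T))" .
    have "G ^ n \<le> exp (- (lam * (1 - \<beta> / 2) * lw T)) ^ n"
      by (rule power_mono[OF Gexp]) (use cb(2) in simp)
    also have "\<dots> = exp (real n * (- (lam * (1 - \<beta> / 2) * lw T)))" by (rule exp_of_nat_mult[symmetric])
    finally have Gn: "exp (lam * (\<delta> * real n * L)) * G ^ n \<le> exp (lam * (\<delta> * real n * L)) * exp (real n * (- (lam * (1 - \<beta> / 2) * lw T)))"
      by (intro mult_left_mono) auto
    have fa: "lam * (\<delta> * real n * L) - real n * (lam * (1 - \<beta>/2) * lw T) \<le> -2 * (x n)\<^sup>2"
    proof (rule final_arith[of \<delta> "1 / r\<^sup>2" a \<beta> e2 Z L "real n" "lw T" lam "(x n)\<^sup>2"])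
      show "1 / r\<^sup>2 = \<delta> + a" unfolding a_def by simp
      show "real n * L / Z\<^sup>2 \<ge> (x n)\<^sup>2"
      proof -
        have "y \<le> L / Z\<^sup>2" using zl(2) unfolding L_def Z_def .
        then have "(x n)\<^sup>2 / real n \<le> L / Z\<^sup>2" unfolding y_def .
        then show ?thesis using n Zpos by (simp add: field_simps)
      qed
    qed (use \<delta> a \<beta> \<beta>3 e2 Zpos Lpos n lwT lam_def in auto)
    have "capacity H E {\<omega>. (\<Sum>i<n. (Xs i \<omega>)\<^sup>2) \<le> \<delta> * real n * l (z n)}
        \<le> ereal (exp (lam * (\<delta> * real n * l (z n))) * G ^ n)" by (rule cb(1))
    also have "\<dots> \<le> ereal (exp (lam * (\<delta> * real n * L)) * exp (real n * (- (lam * (1 - \<beta> / 2) * lw T))))"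
      using Gn unfolding L_def Z_def by simp
    also have "\<dots> = ereal (exp (lam * (\<delta> * real n * L) - real n * (lam * (1 - \<beta>/2) * lw T)))"
      by (simp add: exp_add[symmetric])
    also have "\<dots> \<le> ereal (exp (- 2 * (x n)\<^sup>2))" using fa by simp
    finally show ?case .
  qed
qed


end
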